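(* Let $f\in\mathbb F_q[X,Y]$ be a permutation group polynomial with permutation polynomial tuple $\underline\beta_f=(\beta_0,\dots,\beta_{q-1})$, and let $h$ be a permutation of $\mathbb F_q$ that intersects $\beta_i$ simply for every $i\in\{0,\dots,q-1\}$. Then $(h\beta_0,\dots,h\beta_{q-1})$ is a permutation polynomial tuple, and the LPP $g$ associated with it is a companion of $f$.
   Context: $q$ is a prime power and $\mathbb F_q=\{c_0,\dots,c_{q-1}\}$ is a fixed enumeration; $\mathfrak S_q$ is the symmetric group of permutations of $\mathbb F_q$, composed right to left, $(\sigma\tau)(x)=\sigma(\tau(x))$. Every function $\mathbb F_q^2\to\mathbb F_q$ is identified with the unique polynomial in $\mathbb F_q[X,Y]$ of degree $<q$ in each variable representing it. $f\in\mathbb F_q[X,Y]$ is a local permutation polynomial (LPP) if $x\mapsto f(x,y_0)$ and $y\mapsto f(x_0,y)$ are permutations of $\mathbb F_q$ for all $x_0,y_0\in\mathbb F_q$. A permutation polynomial tuple is $(\beta_0,\dots,\beta_{q-1})\in\mathfrak S_q^q$ such that $\beta_i^{-1}\beta_j$ has no fixed point whenever $i\ne j$. LPPs $f$ correspond bijectively to permutation polynomial tuples $\underline\beta_f=(\beta_0,\dots,\beta_{q-1})$ via $f(x,\beta_i(x))=c_i$ for all $x\in\mathbb F_q$ and all $i$. An LPP $f$ is a permutation group polynomial if $\{\beta_0,\dots,\beta_{q-1}\}$ is a subgroup of $\mathfrak S_q$. Two LPPs $f,g$ are orthogonal (companions of each other) if for every $(a,b)\in\mathbb F_q^2$ the system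 $f(X,Y)=a$, $g(X,Y)=b$ has exactly one solution in $\mathbb F_q^2$; a companion of $f$ is an LPP orthogonal to $f$. Two permutations $h_1,h_2$ of $\mathbb F_q$ intersect simply if there is exactly one $c\in\mathbb F_q$ with $h_1(c)=h_2(c)$. *)

theory Defs
  imports "HOL-Algebra.Bij" "HOL-Library.Cardinality"
begin

(* F_q is modelled by a finite field type 'a :: {finite, field}; q = CARD('a).
   Functions F_q^2 -> F_q (= reduced polynomials) are modelled as 'a => 'a => 'a. *)

definition is_LPP :: "('a \<Rightarrow> 'a \<Rightarrow> 'a) \<Rightarrow> bool" where
  "is_LPP f \<longleftrightarrow> (\<forall>y0. bij (\<lambda>x. f x y0)) \<and> (\<forall>x0. bij (\<lambda>y. f x0 y))"

definition is_ppt :: "nat \<Rightarrow> (nat \<Rightarrow> 'a \<Rightarrow> 'a) \<Rightarrow> bool" where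
  "is_ppt q B \<longleftrightarrow> (\<forall>i<q. bij (B i)) \<and>
     (\<forall>i<q. \<forall>j<q. i \<noteq> j \<longrightarrow> (\<forall>x. (inv_into UNIV (B i) \<circ> B j) x \<noteq> x))"

definition assoc_tuple :: "nat \<Rightarrow> (nat \<Rightarrow> 'a) \<Rightarrow> ('a \<Rightarrow> 'a \<Rightarrow> 'a) \<Rightarrow> (nat \<Rightarrow> 'a \<Rightarrow> 'a) \<Rightarrow> bool" where
  "assoc_tuple q c f B \<longleftrightarrow> (\<forall>i<q. \<forall>x. f x (B i x) = c i)"

definition is_perm_group_poly :: "nat \<Rightarrow> (nat \<Rightarrow> 'a) \<Rightarrow> ('a \<Rightarrow> 'a \<Rightarrow> 'a) \<Rightarrow> (nat \<Rightarrow> 'a \<Rightarrow> 'a) \<Rightarrow> bool" where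
  "is_perm_group_poly q c f B \<longleftrightarrow> is_LPP f \<and> is_ppt q B \<and> assoc_tuple q c f B \<and>
     subgroup (B ` {..<q}) (BijGroup (UNIV :: 'a set))"

definition orthogonal :: "('a \<Rightarrow> 'a \<Rightarrow> 'a) \<Rightarrow> ('a \<Rightarrow> 'a \<Rightarrow> 'a) \<Rightarrow> bool" where
  "orthogonal f g \<longleftrightarrow> (\<forall>a b. \<exists>!p. f (fst p) (snd p) = a \<and> g (fst p) (snd p) = b)"

definition companion :: "('a \<Rightarrow> 'a \<Rightarrow> 'a) \<Rightarrow> ('a \<Rightarrow> 'a \<Rightarrow> 'a) \<Rightarrow> bool" where
  "companion g f \<longleftrightarrow> is_LPP f \<and> is_LPP g \<and> orthogonal f g"

definition intersect_simply :: "('a \<Rightarrow> 'a) \<Rightarrow> ('a \<Rightarrow> 'a) \<Rightarrow> bool" where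
  "intersect_simply h1 h2 \<longleftrightarrow> bij h1 \<and> bij h2 \<and> (\<exists>!c. h1 c = h2 c)"

end

theory Submission
  imports Defs
begin

lemma bijgroup_facts:
  fixes B :: "nat \<Rightarrow> 'a \<Rightarrow> 'a"
  assumes sg: "subgroup (B ` {..<n}) (BijGroup (UNIV :: 'a set))"
    and i: "i < n" and j: "j < n" and bj: "bij (B j)" and bi: "bij (B i)"
  shows "\<exists>k<n. B k = B i \<circ> inv_into UNIV (B j)"
proof -
  have bjB: "B j \<in> Bij UNIV" using bj by (simp add: Bij_def)
  have "inv\<^bsub>BijGroup UNIV\<^esub> (B j) \<in> B ` {..<n}"
    using subgroup.m_inv_closed[OF sg] j by blast
  hence iv: "inv_into UNIV (B j) \<in> B ` {..<n}"
    using inv_BijGroup[OF bjB] by (simp add: restrict_UNIV)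
  have "B i \<otimes>\<^bsub>BijGroup UNIV\<^esub> inv_into UNIV (B j) \<in> B ` {..<n}"
    using subgroup.m_closed[OF sg] i iv by blast
  moreover have "inv_into UNIV (B j) \<in> Bij UNIV" using bij_imp_bij_inv[OF bj]
    by (simp add: Bij_def)
  moreover have "B i \<in> Bij UNIV" using bi by (simp add: Bij_def)
  ultimately have "B i \<circ> inv_into UNIV (B j) \<in> B ` {..<n}"
    by (simp add: BijGroup_def compose_def restrict_UNIV o_def)
  thus ?thesis by force
qed

theorem lemma4p4:
  fixes c :: "nat \<Rightarrow> 'a :: {finite, field}"
    and f :: "'a \<Rightarrow> 'a \<Rightarrow> 'a"
    and B :: "nat \<Rightarrow> 'a \<Rightarrow> 'a"
    and h :: "'a \<Rightarrow> 'a"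
  assumes enum: "bij_betw c (lessThan CARD('a)) (UNIV :: 'a set)"
    and pgp: "is_perm_group_poly CARD('a) c f B"
    and hperm: "bij h"
    and simp: "\<forall>i<CARD('a). intersect_simply h (B i)"
  shows "is_ppt CARD('a) (\<lambda>i. h \<circ> B i)
    \<and> (\<exists>g. is_LPP g \<and> assoc_tuple CARD('a) c g (\<lambda>i. h \<circ> B i))
    \<and> (\<forall>g. is_LPP g \<and> assoc_tuple CARD('a) c g (\<lambda>i. h \<circ> B i) \<longrightarrow> companion g f)"
proof -
  let ?n = "CARD('a)"
  have lpp: "is_LPP f" and ppt: "is_ppt ?n B" and at: "assoc_tuple ?n c f B"
    and sg: "subgroup (B ` {..<?n}) (BijGroup (UNIV :: 'a set))"
    using pgp by (auto simp: is_perm_group_poly_def)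
  have bB: "\<And>i. i < ?n \<Longrightarrow> bij (B i)" using ppt by (simp add: is_ppt_def)
  have dist: "\<And>i j x. i < ?n \<Longrightarrow> j < ?n \<Longrightarrow> B i x = B j x \<Longrightarrow> i = j"
  proof (rule ccontr)
    fix i j x assume a: "i < ?n" "j < ?n" "B i x = B j x" "i \<noteq> j"
    hence "inv_into UNIV (B i) (B j x) \<noteq> x" using ppt by (auto simp: is_ppt_def)
    moreover have "inv_into UNIV (B i) (B i x) = x" using bB[OF a(1)] by (simp add: bij_is_inj)
    ultimately show False using a by simp
  qed
  have hinj: "inj h" using hperm by (simp add: bij_is_inj)
  have cinj: "inj_on c {..<?n}" using enum by (simp add: bij_betw_def)
  have ppt2: "is_ppt ?n (\<lambda>i. h \<circ> B i)"
    unfolding is_ppt_def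
  proof (intro conjI allI impI)
    fix i assume "i < ?n" thus "bij (h \<circ> B i)" using bB hperm by (simp add: bij_comp)
  next
    fix i j x assume a: "i < ?n" "j < ?n" "i \<noteq> j"
    show "(inv_into UNIV (h \<circ> B i) \<circ> (h \<circ> B j)) x \<noteq> x"
    proof
      assume e: "(inv_into UNIV (h \<circ> B i) \<circ> (h \<circ> B j)) x = x"
      have bij2: "bij (h \<circ> B i)" using bB a hperm by (simp add: bij_comp)
      have "(h \<circ> B i) x = (h \<circ> B j) x"
        using e bij2 by (metis comp_apply bij_inv_eq_iff)
      hence "B i x = B j x" using hinj by (simp add: inj_eq)
      thus False using dist a by blast
    qed
  qed
  have surjB: "\<And>x y. \<exists>i<?n. h (B i x) = y"
  proof -
    fix x y :: 'a
    have inj: "inj_on (\<lambda>i. h (B i x)) {..<?n}"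
      by (rule inj_onI) (use dist hinj in \<open>auto simp: inj_eq\<close>)
    have "(\<lambda>i. h (B i x)) ` {..<?n} = UNIV"
      by (rule card_subset_eq) (use inj in \<open>auto simp: card_image\<close>)
    hence "y \<in> (\<lambda>i. h (B i x)) ` {..<?n}" by simp
    thus "\<exists>i<?n. h (B i x) = y" by auto
  qed
  define idx where "idx x y = (SOME i. i < ?n \<and> h (B i x) = y)" for x y
  have idx: "\<And>x y. idx x y < ?n \<and> h (B (idx x y) x) = y"
    unfolding idx_def using someI_ex[OF surjB] by simp
  define g0 where "g0 x y = c (idx x y)" for x y
  have g0LPP: "is_LPP g0"
    unfolding is_LPP_def
  proof (intro conjI allI)
    fix y0
    have "inj (\<lambda>x. g0 x y0)"
    proof (rule injI)
      fix x x' assume "g0 x y0 = g0 x' y0"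
      hence "idx x y0 = idx x' y0" using cinj idx unfolding g0_def by (meson inj_onD lessThan_iff)
      hence "h (B (idx x y0) x) = h (B (idx x y0) x')" using idx[of x y0] idx[of x' y0] by simp
      hence "B (idx x y0) x = B (idx x y0) x'" using hinj by (simp add: inj_eq)
      moreover have "inj (B (idx x y0))" using bB idx[of x y0] by (simp add: bij_is_inj)
      ultimately show "x = x'" by (simp add: inj_eq)
    qed
    thus "bij (\<lambda>x. g0 x y0)" by (simp add: bij_def finite_UNIV_inj_surj)
  next
    fix x0
    have "inj (\<lambda>y. g0 x0 y)"
    proof (rule injI)
      fix y y' assume "g0 x0 y = g0 x0 y'"
      hence "idx x0 y = idx x0 y'" using cinj idx unfolding g0_def by (meson inj_onD lessThan_iff)
      thus "y = y'" using idx[of x0 y] idx[of x0 y'] by metis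
    qed
    thus "bij (\<lambda>y. g0 x0 y)" by (simp add: bij_def finite_UNIV_inj_surj)
  qed
  have g0at: "assoc_tuple ?n c g0 (\<lambda>i. h \<circ> B i)"
    unfolding assoc_tuple_def g0_def
  proof (intro allI impI)
    fix i x assume i: "i < ?n"
    have "h (B (idx x (h (B i x))) x) = h (B i x)" using idx by simp
    hence "B (idx x (h (B i x))) x = B i x" using hinj by (simp add: inj_eq)
    hence "idx x (h (B i x)) = i" using dist i idx by blast
    thus "c (idx x ((h \<circ> B i) x)) = c i" by simp
  qed
  have comp: "companion g f" if g: "is_LPP g" "assoc_tuple ?n c g (\<lambda>i. h \<circ> B i)" for g
  proof -
    have fchar: "\<And>i x y. i < ?n \<Longrightarrow> f x y = c i \<longleftrightarrow> y = B i x"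
    proof -
      fix i x y assume i: "i < ?n"
      have "inj (f x)" using lpp by (simp add: is_LPP_def bij_is_inj)
      moreover have "f x (B i x) = c i" using at i by (simp add: assoc_tuple_def)
      ultimately show "f x y = c i \<longleftrightarrow> y = B i x" by (metis inj_eq)
    qed
    have gchar: "\<And>i x y. i < ?n \<Longrightarrow> g x y = c i \<longleftrightarrow> y = h (B i x)"
    proof -
      fix i x y assume i: "i < ?n"
      have "inj (g x)" using g by (simp add: is_LPP_def bij_is_inj)
      moreover have "g x (h (B i x)) = c i" using g i by (simp add: assoc_tuple_def)
      ultimately show "g x y = c i \<longleftrightarrow> y = h (B i x)" by (metis inj_eq)
    qed
    have orth: "orthogonal f g"
      unfolding orthogonal_def
    proof (intro allI)
      fix a b :: 'a
      obtain i where i: "i < ?n" "c i = a" using bij_betw_imp_surj_on[OF enum] by (metis UNIV_I imageE lessThan_iff)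
      obtain j where j: "j < ?n" "c j = b" using bij_betw_imp_surj_on[OF enum] by (metis UNIV_I imageE lessThan_iff)
      obtain k where k: "k < ?n" "B k = B i \<circ> inv_into UNIV (B j)"
        using bijgroup_facts[OF sg i(1) j(1) bB[OF j(1)] bB[OF i(1)]] by blast
      have "\<exists>!z. h z = B k z" using simp k(1) by (simp add: intersect_simply_def)
      then obtain z where z: "h z = B k z" and zu: "\<And>z'. h z' = B k z' \<Longrightarrow> z' = z" by blast
      have bj: "bij (B j)" using bB j by simp
      define x0 where "x0 = inv_into UNIV (B j) z"
      have Bjx0: "B j x0 = z" unfolding x0_def using bj by (simp add: bij_is_surj surj_f_inv_f)
      have key: "B i x0 = h (B j x0)" using z k(2) Bjx0 x0_def by simp
      show "\<exists>!p. f (fst p) (snd p) = a \<and> g (fst p) (snd p) = b"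
      proof (rule ex1I[of _ "(x0, B i x0)"])
        show "f (fst (x0, B i x0)) (snd (x0, B i x0)) = a \<and> g (fst (x0, B i x0)) (snd (x0, B i x0)) = b"
          using fchar[OF i(1)] gchar[OF j(1)] i j key by simp
      next
        fix p assume p: "f (fst p) (snd p) = a \<and> g (fst p) (snd p) = b"
        obtain p1 p2 where pp: "p = (p1, p2)" by (cases p)
        have e1: "p2 = B i p1" using p pp fchar[OF i(1)] i by simp
        have e2: "p2 = h (B j p1)" using p pp gchar[OF j(1)] j by simp
        have "inv_into UNIV (B j) (B j p1) = p1" using bj by (simp add: bij_is_inj)
        hence "h (B j p1) = B k (B j p1)" using e1 e2 k(2) by simp
        hence "B j p1 = z" using zu by blast
        hence "p1 = x0" unfolding x0_def using bj by (metis bij_is_inj inv_f_f)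
        thus "p = (x0, B i x0)" using pp e1 by simp
      qed
    qed
    show ?thesis using orth g lpp by (simp add: companion_def)
  qed
  show ?thesis using ppt2 g0LPP g0at comp by blast
qed

end
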